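(* Let $\mathscr{H}$ be a complex Hilbert space, $N(\cdot)$ a norm on $\mathbb{B}(\mathscr{H})$, and $B,C\in\mathbb{B}(\mathscr{H})$ self-adjoint. Then $$\frac{1}{\sqrt2}\max\{N(B+C),N(B-C)\}\leq w_{(N,e)}(B,C)\leq\frac{1}{\sqrt2}\sqrt{N^2(B+C)+N^2(B-C)}.$$
   Context: For $T\in\mathbb{B}(\mathscr{H})$, $\Re(T)=\frac12(T+T^* )$. For $B,C\in\mathbb{B}(\mathscr{H})$, $w_{(N,e)}(B,C)=\sup_{\lambda_1,\lambda_2\in\mathbb{C},\ |\lambda_1|^2+|\lambda_2|^2\leq 1}\sup_{\theta\in\mathbb{R}} N(\Re(e^{i\theta}(\lambda_1B+\lambda_2C)))$. *)

theory Defs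
  imports "HOL-Analysis.Analysis"
begin

class chilbert = banach +
  fixes scaleC :: "complex \<Rightarrow> 'a \<Rightarrow> 'a"
    and cinner :: "'a \<Rightarrow> 'a \<Rightarrow> complex"
  assumes scaleC_add_right: "scaleC a (x + y) = scaleC a x + scaleC a y"
    and scaleC_add_left: "scaleC (a + b) x = scaleC a x + scaleC b x"
    and scaleC_scaleC: "scaleC a (scaleC b x) = scaleC (a * b) x"
    and scaleC_one: "scaleC 1 x = x"
    and scaleR_scaleC: "scaleR r x = scaleC (complex_of_real r) x"
    and cinner_commute: "cinner y x = cnj (cinner x y)"
    and cinner_add_left: "cinner (x + y) z = cinner x z + cinner y z"
    and cinner_scaleC_left: "cinner (scaleC a x) y = a * cinner x y"
    and cinner_self_norm: "cinner x x = complex_of_real ((norm x)\<^sup>2)"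

definition bounded_clinear :: "('a::chilbert \<Rightarrow> 'a) \<Rightarrow> bool" where
  "bounded_clinear T \<longleftrightarrow>
     (\<forall>x y. T (x + y) = T x + T y) \<and>
     (\<forall>c x. T (scaleC c x) = scaleC c (T x)) \<and>
     (\<exists>K. \<forall>x. norm (T x) \<le> norm x * K)"

definition adjoint :: "('a::chilbert \<Rightarrow> 'a) \<Rightarrow> ('a \<Rightarrow> 'a)" where
  "adjoint T = (THE S. bounded_clinear S \<and> (\<forall>x y. cinner (T x) y = cinner x (S y)))"

definition selfadjoint :: "('a::chilbert \<Rightarrow> 'a) \<Rightarrow> bool" where
  "selfadjoint T \<longleftrightarrow> bounded_clinear T \<and> adjoint T = T"

definition ReOp :: "('a::chilbert \<Rightarrow> 'a) \<Rightarrow> ('a \<Rightarrow> 'a)" where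
  "ReOp T = (\<lambda>x. scaleC (1/2) (T x + adjoint T x))"

definition is_op_norm :: "(('a::chilbert \<Rightarrow> 'a) \<Rightarrow> real) \<Rightarrow> bool" where
  "is_op_norm N \<longleftrightarrow>
     (\<forall>T. bounded_clinear T \<longrightarrow> N T \<ge> 0) \<and>
     (\<forall>T. bounded_clinear T \<longrightarrow> (N T = 0 \<longleftrightarrow> T = (\<lambda>_. 0))) \<and>
     (\<forall>c T. bounded_clinear T \<longrightarrow> N (\<lambda>x. scaleC c (T x)) = cmod c * N T) \<and>
     (\<forall>S T. bounded_clinear S \<longrightarrow> bounded_clinear T \<longrightarrow> N (\<lambda>x. S x + T x) \<le> N S + N T)"

definition w_Ne :: "(('a::chilbert \<Rightarrow> 'a) \<Rightarrow> real) \<Rightarrow> ('a \<Rightarrow> 'a) \<Rightarrow> ('a \<Rightarrow> 'a) \<Rightarrow> real" where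
  "w_Ne N B C =
     (SUP p \<in> {(l1, l2, \<theta>). (cmod l1)\<^sup>2 + (cmod l2)\<^sup>2 \<le> 1 \<and> \<theta> \<in> (UNIV :: real set)}.
        (case p of (l1, l2, \<theta>) \<Rightarrow>
          N (ReOp (\<lambda>x. scaleC (exp (\<i> * complex_of_real \<theta>)) (scaleC l1 (B x) + scaleC l2 (C x))))))"

end

theory Submission
  imports Defs
begin

interpretation cm: module "scaleC :: complex \<Rightarrow> 'a::chilbert \<Rightarrow> 'a"
  by unfold_locales (simp_all add: scaleC_add_right scaleC_add_left scaleC_scaleC scaleC_one)

lemma cinner_add_right: "cinner x (y + z) = cinner x y + cinner x z"
  by (metis cinner_commute cinner_add_left complex_cnj_add)

lemma cinner_scaleC_right: "cinner x (scaleC a y) = cnj a * cinner x y"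
  by (metis cinner_commute cinner_scaleC_left complex_cnj_mult)

lemma scaleC_minus1: "scaleC (-1) (x::'a::chilbert) = - x"
  using scaleR_scaleC[of "-1" x] by simp

lemma cinner_minus_left: "cinner (- x) y = - cinner (x::'a::chilbert) y"
  by (metis scaleC_minus1 cinner_scaleC_left mult_minus1)

lemma cinner_minus_right: "cinner x (- y) = - cinner (x::'a::chilbert) y"
  by (metis cinner_commute cinner_minus_left complex_cnj_minus)

lemma cinner_diff_left: "cinner (x - z) y = cinner x y - cinner (z::'a::chilbert) y"
  by (metis cinner_add_left cinner_minus_left diff_conv_add_uminus)

lemma cinner_diff_right: "cinner x (y - z) = cinner x y - cinner (x::'a::chilbert) z"
  by (metis cinner_add_right cinner_minus_right diff_conv_add_uminus)

lemma cinner_zero_left[simp]: "cinner 0 y = 0"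
  by (metis cinner_diff_left diff_self)

lemma cinner_zero_right[simp]: "cinner x 0 = 0"
  by (metis cinner_diff_right diff_self)

lemma norm_scaleC: "norm (scaleC c (x::'a::chilbert)) = cmod c * norm x"
proof -
  have "complex_of_real ((norm (scaleC c x))\<^sup>2) = cinner (scaleC c x) (scaleC c x)"
    by (simp add: cinner_self_norm)
  also have "\<dots> = c * cnj c * cinner x x"
    by (simp add: cinner_scaleC_left cinner_scaleC_right mult.assoc)
  also have "\<dots> = complex_of_real ((cmod c * norm x)\<^sup>2)"
    by (simp add: cinner_self_norm complex_norm_square[symmetric] power_mult_distrib)
  finally have "(norm (scaleC c x))\<^sup>2 = (cmod c * norm x)\<^sup>2" using of_real_eq_iff by blast
  then show ?thesis by (simp add: power2_eq_iff_nonneg)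
qed

lemma cinner_ext: assumes "\<And>x. cinner x a = cinner x (b::'a::chilbert)" shows "a = b"
proof -
  have "cinner (a - b) (a - b) = 0" using assms by (simp add: cinner_diff_right)
  then show ?thesis by (simp add: cinner_self_norm)
qed

lemma cauchy_schwarz: "cmod (cinner x y) \<le> norm x * norm (y::'a::chilbert)"
proof (cases "y = 0")
  case True then show ?thesis by simp
next
  case False
  define a where "a = cinner x y"
  define n where "n = (norm y)\<^sup>2"
  have n: "n > 0" using False by (simp add: n_def)
  define v where "v = scaleC (of_real n) x - scaleC a y"
  have "cinner v v = of_real n * of_real n * cinner x x - of_real n * cnj a * cinner x y
      - a * of_real n * cinner y x + a * cnj a * cinner y y"
    by (simp add: v_def cinner_diff_left cinner_diff_right cinner_scaleC_left cinner_scaleC_right algebra_simps)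
  also have "\<dots> = of_real (n * n * (norm x)\<^sup>2 - n * (cmod a)\<^sup>2)"
    apply (simp add: cinner_self_norm a_def n_def[symmetric])
    apply (subst cinner_commute[of y x])
    apply (simp add: complex_norm_square[symmetric] a_def[symmetric] n_def algebra_simps)
    done
  finally have "0 \<le> n * n * (norm x)\<^sup>2 - n * (cmod a)\<^sup>2"
    by (metis cinner_self_norm of_real_eq_iff zero_le_power2)
  then have "(cmod a)\<^sup>2 \<le> n * (norm x)\<^sup>2" using n
    by (smt (verit) mult_le_cancel_left_pos power2_eq_square mult.assoc)
  then have "(cmod a)\<^sup>2 \<le> (norm x * norm y)\<^sup>2" by (simp add: n_def power_mult_distrib mult.commute)
  then show ?thesis unfolding a_def by (simp add: power2_le_iff_abs_le)
qed


lemma riesz: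
  fixes f :: "'a::chilbert \<Rightarrow> complex"
  assumes add: "\<And>x y. f (x + y) = f x + f y" and sc: "\<And>c x. f (scaleC c x) = c * f x"
    and bnd: "\<And>x. cmod (f x) \<le> norm x * K"
  shows "\<exists>z. \<forall>x. f x = cinner x z"
proof (cases "\<forall>x. f x = 0")
  case True then show ?thesis by (intro exI[of _ 0]) simp
next
  case False
  then obtain y0 where y0: "f y0 \<noteq> 0" by blast
  have f0: "f 0 = 0" using add[of 0 0] by simp
  have bl: "bounded_linear f"
  proof (rule bounded_linear_intro[where K=K])
    show "f (x + y) = f x + f y" for x y by (rule add)
    show "f (r *\<^sub>R x) = r *\<^sub>R f x" for r x
      by (simp add: scaleR_scaleC sc scaleR_conv_of_real)
    show "norm (f x) \<le> norm x * K" for x by (rule bnd)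
  qed
  define U where "U = {x::'a. norm x \<le> 1}"
  define M where "M = (SUP x\<in>U. Re (f x))"
  have U0: "(0::'a) \<in> U" by (simp add: U_def)
  have bdd: "bdd_above ((\<lambda>x. Re (f x)) ` U)"
  proof (rule bdd_aboveI2)
    fix x assume "x \<in> U"
    then have "norm x \<le> 1" by (simp add: U_def)
    have "Re (f x) \<le> cmod (f x)" by (rule complex_Re_le_cmod)
    also have "\<dots> \<le> norm x * K" by (rule bnd)
    also have "\<dots> \<le> norm x * \<bar>K\<bar>" by (simp add: mult_left_mono)
    also have "\<dots> \<le> 1 * \<bar>K\<bar>" using \<open>norm x \<le> 1\<close> by (intro mult_right_mono) auto
    finally show "Re (f x) \<le> \<bar>K\<bar>" by simp
  qed
  have keyRe: "Re (f w) \<le> M * norm w" for w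
  proof (cases "w = 0")
    case True then show ?thesis by (simp add: f0)
  next
    case False
    define u where "u = scaleC (of_real (1 / norm w)) w"
    have "norm u = 1" using False by (simp add: u_def norm_scaleC norm_divide)
    then have "u \<in> U" by (simp add: U_def)
    then have "Re (f u) \<le> M" unfolding M_def by (rule cSUP_upper[OF _ bdd])
    moreover have "Re (f u) = Re (f w) / norm w" by (simp add: u_def sc)
    ultimately show ?thesis using False by (simp add: divide_le_eq mult.commute)
  qed
  have keyN: "cmod (f w) \<le> M * norm w" for w
  proof (cases "f w = 0")
    case True
    then show ?thesis using keyRe[of w] by simp
  next
    case False
    define c where "c = cnj (f w) / of_real (cmod (f w))"
    have "cmod c = 1" using False by (simp add: c_def norm_divide)
    have "f (scaleC c w) = of_real (cmod (f w))"
      using False by (simp add: sc c_def complex_norm_square[symmetric] power2_eq_square mult.commute)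
    then have "cmod (f w) \<le> M * norm (scaleC c w)" using keyRe[of "scaleC c w"] by simp
    then show ?thesis using \<open>cmod c = 1\<close> by (simp add: norm_scaleC)
  qed
  have Mpos: "M > 0"
  proof -
    have "0 < cmod (f y0)" using y0 by simp
    also have "\<dots> \<le> M * norm y0" by (rule keyN)
    finally have h: "0 < M * norm y0" .
    show ?thesis
    proof (rule ccontr)
      assume "\<not> M > 0"
      then have "M * norm y0 \<le> 0" by (simp add: mult_nonpos_nonneg)
      with h show False by simp
    qed
  qed
  define d where "d n = inverse (real (Suc n))" for n
  have dpos: "d n > 0" for n by (simp add: d_def)
  have "\<exists>x\<in>U. M - d n < Re (f x)" for n
    unfolding M_def
    by (rule less_cSUP_iff[THEN iffD1]) (use U0 bdd dpos[of n] M_def in auto)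
  then obtain X where XU: "X n \<in> U" and XM: "M - d n < Re (f (X n))" for n by metis
  have Xn: "norm (X n) \<le> 1" for n using XU[of n] by (simp add: U_def)
  have par: "(norm (x - y))\<^sup>2 + (norm (x + y))\<^sup>2 = 2 * (norm x)\<^sup>2 + 2 * (norm (y::'a))\<^sup>2" for x y
  proof -
    have "complex_of_real ((norm (x - y))\<^sup>2 + (norm (x + y))\<^sup>2) = cinner (x - y) (x - y) + cinner (x + y) (x + y)"
      by (simp add: cinner_self_norm)
    also have "\<dots> = 2 * cinner x x + 2 * cinner y y"
      by (simp add: cinner_diff_left cinner_diff_right cinner_add_left cinner_add_right)
    also have "\<dots> = complex_of_real (2 * (norm x)\<^sup>2 + 2 * (norm (y::'a))\<^sup>2)"
      by (simp add: cinner_self_norm)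
    finally show ?thesis using of_real_eq_iff by blast
  qed
  have cb: "(norm (X m - X n))\<^sup>2 \<le> 4 * ((d m + d n) / M)" for m n
  proof -
    have "2 * M - d m - d n < Re (f (X m + X n))" using XM[of m] XM[of n] by (simp add: add)
    also have "\<dots> \<le> M * norm (X m + X n)" by (rule keyRe)
    finally have s: "2 - (d m + d n) / M \<le> norm (X m + X n)" using Mpos
      by (simp add: field_simps)
    have p: "(norm (X m - X n))\<^sup>2 \<le> 4 - (norm (X m + X n))\<^sup>2"
    proof -
      have "(norm (X k))\<^sup>2 \<le> 1" for k using Xn[of k] by (simp add: power_le_one)
      then show ?thesis using par[of "X m" "X n"] by (smt (verit))
    qed
    define e where "e = (d m + d n) / M"
    have e0: "e \<ge> 0" using dpos[of m] dpos[of n] Mpos by (simp add: e_def)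
    show ?thesis
    proof (cases "e \<le> 2")
      case True
      have "(2 - e)\<^sup>2 \<le> (norm (X m + X n))\<^sup>2"
        using s True by (intro power_mono) (auto simp: e_def)
      moreover have "(2-e)\<^sup>2 = 4 - 4*e + e\<^sup>2" by (simp add: power2_eq_square algebra_simps)
      ultimately show ?thesis using p zero_le_power2[of e] unfolding e_def[symmetric] by linarith
    next
      case False
      then show ?thesis using p zero_le_power2[of "norm (X m + X n)"] unfolding e_def[symmetric] by linarith
    qed
  qed
  have "Cauchy X"
  proof (rule metric_CauchyI)
    fix \<epsilon> :: real assume "\<epsilon> > 0"
    obtain N :: nat where N: "8 / (M * \<epsilon>\<^sup>2) < real (Suc N)"
      by (meson reals_Archimedean2 less_trans lessI of_nat_less_iff)
    show "\<exists>N. \<forall>m\<ge>N. \<forall>n\<ge>N. dist (X m) (X n) < \<epsilon>"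
    proof (intro exI allI impI)
      fix m n assume "N \<le> m" "N \<le> n"
      have dm: "d m \<le> inverse (real (Suc N))" "d n \<le> inverse (real (Suc N))"
        using \<open>N \<le> m\<close> \<open>N \<le> n\<close> by (auto simp: d_def intro!: le_imp_inverse_le)
      have "(dist (X m) (X n))\<^sup>2 \<le> 4 * ((d m + d n) / M)" unfolding dist_norm by (rule cb)
      also have "\<dots> \<le> 4 * (2 * inverse (real (Suc N)) / M)"
        using dm Mpos by (intro mult_left_mono divide_right_mono) auto
      also have "\<dots> = 8 / (M * real (Suc N))" by (simp add: field_simps)
      also have "\<dots> < \<epsilon>\<^sup>2"
      proof -
        have me: "M * \<epsilon>\<^sup>2 > 0" using Mpos \<open>\<epsilon> > 0\<close> by simp
        have "8 < real (Suc N) * (M * \<epsilon>\<^sup>2)" using N me by (simp add: pos_divide_less_eq)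
        moreover have "M * real (Suc N) > 0" using Mpos by simp
        ultimately show ?thesis by (simp add: pos_divide_less_eq mult_ac)
      qed
      finally show "dist (X m) (X n) < \<epsilon>"
        using \<open>\<epsilon> > 0\<close> by (simp add: power_less_imp_less_base)
    qed
  qed
  then obtain x0 where lim: "X \<longlonglongrightarrow> x0" using Cauchy_convergent_iff convergent_def by blast
  have nx0: "norm x0 \<le> 1"
    by (rule LIMSEQ_le_const2[OF tendsto_norm[OF lim]]) (use Xn in auto)
  have limf: "(\<lambda>n. Re (f (X n))) \<longlonglongrightarrow> Re (f x0)"
    by (intro tendsto_Re bounded_linear.tendsto[OF bl lim])
  have limd: "(\<lambda>n. M - d n) \<longlonglongrightarrow> M - 0"
    unfolding d_def by (intro tendsto_diff tendsto_const LIMSEQ_inverse_real_of_nat)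
  have "M \<le> Re (f x0)"
    using LIMSEQ_le[OF limd limf] XM less_imp_le by auto
  then have Mx0: "Re (f x0) = M" "norm x0 = 1"
  proof -
    have a: "M * norm x0 \<le> M" using nx0 Mpos by (simp add: mult_left_le)
    show "Re (f x0) = M" using a keyRe[of x0] \<open>M \<le> Re (f x0)\<close> by linarith
    have "M \<le> M * norm x0" using keyRe[of x0] \<open>M \<le> Re (f x0)\<close> by linarith
    then show "norm x0 = 1" using nx0 Mpos by (simp add: mult_le_cancel_left1)
  qed
  have fx0: "f x0 = of_real M"
  proof -
    have "cmod (f x0) \<le> M" using keyN[of x0] Mx0 by simp
    then have "(Re (f x0))\<^sup>2 + (Im (f x0))\<^sup>2 \<le> M\<^sup>2"
      using cmod_power2[of "f x0"] Mpos by (metis norm_ge_zero power_mono)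
    then have "Im (f x0) = 0" using Mx0 by simp
    then show ?thesis using Mx0 by (simp add: complex_eq_iff)
  qed
  have orth: "cinner y x0 = 0" if fy: "f y = 0" for y
  proof -
    define a where "a = cinner y x0"
    define s where "s = 1 / ((norm y)\<^sup>2 + 1)"
    have p: "(norm y)\<^sup>2 + 1 > 0" by (simp add: add_nonneg_pos)
    have s0: "s > 0" "s * (norm y)\<^sup>2 < 1" using p by (auto simp: s_def divide_less_eq)
    define t where "t = - (of_real s * cnj a)"
    have ac: "a * cnj a = (of_real (cmod a))\<^sup>2" by (simp add: complex_norm_square[symmetric])
    have ac2: "a * (cnj a * z) = (of_real (cmod a))\<^sup>2 * z" for z by (simp add: ac mult.assoc[symmetric])
    define v where "v = x0 + scaleC t y"
    have "f v = of_real M" by (simp add: v_def add sc fy fx0)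
    then have "M \<le> M * norm v" using keyN[of v] by simp
    then have "1 \<le> norm v" using Mpos by simp
    then have v1: "1 \<le> (norm v)\<^sup>2" by (simp add: one_le_power)
    have "complex_of_real ((norm v)\<^sup>2) = cinner v v" by (simp add: cinner_self_norm)
    also have "\<dots> = cinner x0 x0 + cnj t * cinner x0 y + t * cinner y x0 + t * cnj t * cinner y y"
      by (simp add: v_def cinner_add_left cinner_add_right
          cinner_scaleC_left cinner_scaleC_right algebra_simps)
    also have "\<dots> = complex_of_real (1 - 2 * s * (cmod a)\<^sup>2 + s * s * (cmod a)\<^sup>2 * (norm y)\<^sup>2)"
      apply (subst cinner_commute[of x0 y])
      apply (simp add: cinner_self_norm Mx0 a_def[symmetric] t_def)
      apply (simp add: ac ac2 algebra_simps)
      done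
    finally have "(norm v)\<^sup>2 = 1 - 2 * s * (cmod a)\<^sup>2 + s * s * (cmod a)\<^sup>2 * (norm y)\<^sup>2"
      using of_real_eq_iff by blast
    with v1 have "0 \<le> s * (cmod a)\<^sup>2 * (s * (norm y)\<^sup>2 - 2)" by (simp add: algebra_simps)
    then have h: "0 \<le> (cmod a)\<^sup>2 * (s * (s * (norm y)\<^sup>2 - 2))" by (simp add: algebra_simps)
    have neg: "s * (s * (norm y)\<^sup>2 - 2) < 0" using s0 by (simp add: mult_pos_neg)
    have "(cmod a)\<^sup>2 \<le> 0"
    proof (rule ccontr)
      assume "\<not> (cmod a)\<^sup>2 \<le> 0"
      then have "(cmod a)\<^sup>2 > 0" by linarith
      then have "(cmod a)\<^sup>2 * (s * (s * (norm y)\<^sup>2 - 2)) < 0" using neg by (rule mult_pos_neg)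
      with h show False by linarith
    qed
    then show ?thesis by (simp add: a_def)
  qed
  show ?thesis
  proof (intro exI allI)
    fix y
    define y' where "y' = y - scaleC (f y / of_real M) x0"
    have "f y' = 0"
    proof -
      have fd: "f (a - b) = f a - f b" for a b using add[of "a - b" b] by simp
      show ?thesis using Mpos by (simp add: y'_def fd sc fx0)
    qed
    then have "cinner y' x0 = 0" by (rule orth)
    then have "cinner y x0 = f y / of_real M"
      by (simp add: y'_def cinner_diff_left cinner_scaleC_left cinner_self_norm Mx0)
    then show "f y = cinner y (scaleC (of_real M) x0)"
      using Mpos by (simp add: cinner_scaleC_right)
  qed
qed


lemma bcl_add: "bounded_clinear T \<Longrightarrow> T (x + y) = T x + T y"
  by (simp add: bounded_clinear_def)

lemma bcl_scale: "bounded_clinear T \<Longrightarrow> T (scaleC c x) = scaleC c (T x)"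
  by (simp add: bounded_clinear_def)

lemma bcl_bound: assumes "bounded_clinear (T::'a::chilbert \<Rightarrow> 'a)"
  obtains K where "K \<ge> 0" "\<And>x. norm (T x) \<le> norm x * K"
proof -
  obtain K where K: "\<And>x. norm (T x) \<le> norm x * K" using assms by (auto simp: bounded_clinear_def)
  have "norm (T x) \<le> norm x * \<bar>K\<bar>" for x
  proof -
    have "norm x * K \<le> norm x * \<bar>K\<bar>" by (intro mult_left_mono) auto
    then show ?thesis using K[of x] by linarith
  qed
  then show ?thesis using that[of "\<bar>K\<bar>"] by simp
qed

lemma bcl_lin:
  assumes "bounded_clinear B" "bounded_clinear (C::'a::chilbert \<Rightarrow> 'a)"
  shows "bounded_clinear (\<lambda>x. scaleC a (B x) + scaleC b (C x))"
proof -
  obtain K1 where K1: "K1 \<ge> 0" "\<And>x. norm (B x) \<le> norm x * K1" using bcl_bound[OF assms(1)] by blast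
  obtain K2 where K2: "K2 \<ge> 0" "\<And>x. norm (C x) \<le> norm x * K2" using bcl_bound[OF assms(2)] by blast
  have "norm (scaleC a (B x) + scaleC b (C x)) \<le> norm x * (cmod a * K1 + cmod b * K2)" for x
  proof -
    have "norm (scaleC a (B x) + scaleC b (C x)) \<le> cmod a * norm (B x) + cmod b * norm (C x)"
      using norm_triangle_ineq[of "scaleC a (B x)" "scaleC b (C x)"] by (simp add: norm_scaleC)
    also have "\<dots> \<le> cmod a * (norm x * K1) + cmod b * (norm x * K2)"
      using K1(2)[of x] K2(2)[of x] by (intro add_mono mult_left_mono) auto
    finally show ?thesis by (simp add: algebra_simps)
  qed
  moreover have "scaleC a (B (x + y)) + scaleC b (C (x + y)) =
      scaleC a (B x) + scaleC b (C x) + (scaleC a (B y) + scaleC b (C y))" for x y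
    by (simp add: bcl_add[OF assms(1)] bcl_add[OF assms(2)] cm.scale_right_distrib)
  moreover have "scaleC a (B (scaleC c x)) + scaleC b (C (scaleC c x)) =
      scaleC c (scaleC a (B x) + scaleC b (C x))" for c x
    by (simp add: bcl_scale[OF assms(1)] bcl_scale[OF assms(2)] cm.scale_right_distrib mult.commute)
  ultimately show ?thesis unfolding bounded_clinear_def by blast
qed

lemma adjoint_exists:
  assumes B: "bounded_clinear (B::'a::chilbert \<Rightarrow> 'a)"
  shows "\<exists>S. bounded_clinear S \<and> (\<forall>x y. cinner (B x) y = cinner x (S y))"
proof -
  obtain K where K: "K \<ge> 0" "\<And>x. norm (B x) \<le> norm x * K" using bcl_bound[OF B] by blast
  have "\<forall>y. \<exists>z. \<forall>x. cinner (B x) y = cinner x z"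
  proof
    fix y
    show "\<exists>z. \<forall>x. cinner (B x) y = cinner x z"
    proof (rule riesz[where K="K * norm y"])
      show "cinner (B (x + x')) y = cinner (B x) y + cinner (B x') y" for x x'
        by (simp add: bcl_add[OF B] cinner_add_left)
      show "cinner (B (scaleC c x)) y = c * cinner (B x) y" for c x
        by (simp add: bcl_scale[OF B] cinner_scaleC_left)
      show "cmod (cinner (B x) y) \<le> norm x * (K * norm y)" for x
      proof -
        have "cmod (cinner (B x) y) \<le> norm (B x) * norm y" by (rule cauchy_schwarz)
        also have "\<dots> \<le> norm x * K * norm y" using K(2)[of x] by (simp add: mult_right_mono)
        finally show ?thesis by (simp add: mult.assoc)
      qed
    qed
  qed
  then obtain S where S: "\<And>x y. cinner (B x) y = cinner x (S y)" by metis
  have Sadd: "S (y + y') = S y + S y'" for y y'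
    by (rule cinner_ext) (simp add: S[symmetric] cinner_add_right)
  have Ssc: "S (scaleC c y) = scaleC c (S y)" for c y
    by (rule cinner_ext) (simp add: S[symmetric] cinner_scaleC_right)
  have Sb: "norm (S y) \<le> norm y * K" for y
  proof (cases "norm (S y) = 0")
    case True then show ?thesis using K by simp
  next
    case False
    have "(norm (S y))\<^sup>2 = cmod (cinner (S y) (S y))" by (simp add: cinner_self_norm del: of_real_power)
    also have "\<dots> = cmod (cinner (B (S y)) y)" by (simp add: S)
    also have "\<dots> \<le> norm (B (S y)) * norm y" by (rule cauchy_schwarz)
    also have "\<dots> \<le> norm (S y) * K * norm y" using K(2)[of "S y"] by (simp add: mult_right_mono)
    finally have "norm (S y) * norm (S y) \<le> norm (S y) * (norm y * K)"
      by (simp add: power2_eq_square mult_ac)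
    then show ?thesis using False by simp
  qed
  have "bounded_clinear S" unfolding bounded_clinear_def using Sadd Ssc Sb by blast
  with S show ?thesis by blast
qed

lemma adjoint_eq:
  assumes "bounded_clinear S" "\<And>x y. cinner (T x) y = cinner x (S y)"
  shows "adjoint T = (S::'a::chilbert \<Rightarrow> 'a)"
  unfolding adjoint_def
proof (rule the_equality)
  show "bounded_clinear S \<and> (\<forall>x y. cinner (T x) y = cinner x (S y))" using assms by blast
  fix S' assume "bounded_clinear S' \<and> (\<forall>x y. cinner (T x) y = cinner x (S' y))"
  then have "cinner x (S' y) = cinner x (S y)" for x y using assms(2) by simp
  then show "S' = S" by (intro ext cinner_ext) 
qed

lemma selfadjoint_sym:
  assumes "selfadjoint (B::'a::chilbert \<Rightarrow> 'a)"
  shows "cinner (B x) y = cinner x (B y)"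
proof -
  have B: "bounded_clinear B" "adjoint B = B" using assms by (auto simp: selfadjoint_def)
  obtain S where S: "bounded_clinear S" "\<And>x y. cinner (B x) y = cinner x (S y)"
    using adjoint_exists[OF B(1)] by blast
  have "adjoint B = S" by (rule adjoint_eq[OF S])
  with B S show ?thesis by simp
qed


lemma bcl_scaleC: "bounded_clinear (T::'a::chilbert \<Rightarrow> 'a) \<Longrightarrow> bounded_clinear (\<lambda>x. scaleC a (T x))"
  using bcl_lin[of T T a 0] by simp

lemma ReOp_T:
  assumes sB: "selfadjoint (B::'a::chilbert \<Rightarrow> 'a)" and sC: "selfadjoint C"
  shows "ReOp (\<lambda>x. scaleC e (scaleC l1 (B x) + scaleC l2 (C x)))
       = (\<lambda>v. scaleC (complex_of_real (Re (e*l1))) (B v) + scaleC (complex_of_real (Re (e*l2))) (C v))"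
proof -
  have bB: "bounded_clinear B" and bC: "bounded_clinear C" using sB sC by (auto simp: selfadjoint_def)
  have T: "(\<lambda>x. scaleC e (scaleC l1 (B x) + scaleC l2 (C x))) = (\<lambda>x. scaleC (e*l1) (B x) + scaleC (e*l2) (C x))"
    by (simp add: cm.scale_right_distrib)
  define S where "S = (\<lambda>x. scaleC (cnj (e*l1)) (B x) + scaleC (cnj (e*l2)) (C x))"
  have adj: "adjoint (\<lambda>x. scaleC (e*l1) (B x) + scaleC (e*l2) (C x)) = S"
    by (rule adjoint_eq)
      (simp_all add: S_def bcl_lin bB bC cinner_add_left cinner_add_right cinner_scaleC_left
        cinner_scaleC_right selfadjoint_sym[OF sB] selfadjoint_sym[OF sC])
  have hRe: "complex_of_real (Re z) = 1/2 * z + 1/2 * cnj z" for z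
    using complex_add_cnj[of z] by (simp add: field_simps)
  show ?thesis
    unfolding ReOp_def T adj
  proof (rule ext)
    fix x
    show "scaleC (1 / 2) (scaleC (e * l1) (B x) + scaleC (e * l2) (C x) + S x) =
         scaleC (complex_of_real (Re (e * l1))) (B x) + scaleC (complex_of_real (Re (e * l2))) (C x)"
      unfolding hRe S_def
      by (simp only: cm.scale_right_distrib cm.scale_left_distrib cm.scale_scale add_ac)
  qed
qed

lemma split_lemma:
  "scaleC (a + b) x + scaleC (a - b) y = scaleC a (x + y) + scaleC b (x - (y::'a::chilbert))"
  by (simp add: cm.scale_left_distrib cm.scale_left_diff_distrib cm.scale_right_distrib
      cm.scale_right_diff_distrib algebra_simps)

lemma cs2:
  fixes p q u w :: real
  assumes "p \<ge> 0" "q \<ge> 0" "u\<^sup>2 + w\<^sup>2 \<le> 1/2"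
  shows "\<bar>u\<bar> * p + \<bar>w\<bar> * q \<le> 1 / sqrt 2 * sqrt (p\<^sup>2 + q\<^sup>2)"
proof -
  have "(\<bar>u\<bar> * p + \<bar>w\<bar> * q)\<^sup>2 \<le> (u\<^sup>2 + w\<^sup>2) * (p\<^sup>2 + q\<^sup>2)"
  proof -
    have "0 \<le> (\<bar>u\<bar> * q - \<bar>w\<bar> * p)\<^sup>2" by simp
    then show ?thesis by (simp add: power2_eq_square algebra_simps)
  qed
  also have "\<dots> \<le> 1/2 * (p\<^sup>2 + q\<^sup>2)" using assms(3) by (intro mult_right_mono) auto
  finally have "\<bar>u\<bar> * p + \<bar>w\<bar> * q \<le> sqrt (1/2 * (p\<^sup>2 + q\<^sup>2))" by (rule real_le_rsqrt)
  also have "\<dots> = 1 / sqrt 2 * sqrt (p\<^sup>2 + q\<^sup>2)" by (simp add: real_sqrt_mult real_sqrt_divide)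
  finally show ?thesis .
qed

theorem corollary2p8:
  fixes N :: "('a::chilbert \<Rightarrow> 'a) \<Rightarrow> real" and B C :: "'a \<Rightarrow> 'a"
  assumes "is_op_norm N"
    and "selfadjoint B" and "selfadjoint C"
  shows "(1 / sqrt 2) * max (N (\<lambda>x. B x + C x)) (N (\<lambda>x. B x - C x)) \<le> w_Ne N B C
       \<and> w_Ne N B C \<le> (1 / sqrt 2) * sqrt ((N (\<lambda>x. B x + C x))\<^sup>2 + (N (\<lambda>x. B x - C x))\<^sup>2)"
proof -
  have bB: "bounded_clinear B" and bC: "bounded_clinear C" using assms by (auto simp: selfadjoint_def)
  have N0: "\<And>T. bounded_clinear T \<Longrightarrow> N T \<ge> 0"
    and Nh: "\<And>c T. bounded_clinear T \<Longrightarrow> N (\<lambda>x. scaleC c (T x)) = cmod c * N T"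
    and Nt: "\<And>S T. bounded_clinear S \<Longrightarrow> bounded_clinear T \<Longrightarrow> N (\<lambda>x. S x + T x) \<le> N S + N T"
    using assms(1) unfolding is_op_norm_def by blast+
  define P where "P = (\<lambda>v. B v + C v)"
  define Q where "Q = (\<lambda>v. B v - C v)"
  have bP: "bounded_clinear P" using bcl_lin[OF bB bC, of 1 1] by (simp add: P_def)
  have bQ: "bounded_clinear Q" using bcl_lin[OF bB bC, of 1 "-1"] by (simp add: Q_def)
  define F where "F p q = N (\<lambda>v. scaleC (complex_of_real p) (B v) + scaleC (complex_of_real q) (C v))" for p q
  define Ub where "Ub = 1 / sqrt 2 * sqrt ((N P)\<^sup>2 + (N Q)\<^sup>2)"
  have Fb: "F p q \<le> Ub" if pq: "p\<^sup>2 + q\<^sup>2 \<le> 1" for p q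
  proof -
    define a where "a = (p+q)/2"
    define b where "b = (p-q)/2"
    have hp: "complex_of_real p = of_real a + of_real b" by (simp add: a_def b_def field_simps)
    have hq: "complex_of_real q = of_real a - of_real b" by (simp add: a_def b_def field_simps)
    have eq: "(\<lambda>v. scaleC (complex_of_real p) (B v) + scaleC (complex_of_real q) (C v))
        = (\<lambda>v. scaleC (complex_of_real a) (P v) + scaleC (complex_of_real b) (Q v))"
      by (rule ext) (simp only: hp hq split_lemma P_def Q_def)
    have "F p q \<le> N (\<lambda>v. scaleC (complex_of_real a) (P v)) + N (\<lambda>v. scaleC (complex_of_real b) (Q v))"
      unfolding F_def eq by (rule Nt) (simp_all add: bcl_scaleC bP bQ)
    also have "\<dots> = \<bar>a\<bar> * N P + \<bar>b\<bar> * N Q" by (simp add: Nh bP bQ)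
    also have "\<dots> \<le> Ub" unfolding Ub_def
    proof (rule cs2)
      show "0 \<le> N P" "0 \<le> N Q" using N0 bP bQ by auto
      have "a\<^sup>2 + b\<^sup>2 = (p\<^sup>2 + q\<^sup>2) / 2" by (simp add: a_def b_def power2_eq_square field_simps)
      then show "a\<^sup>2 + b\<^sup>2 \<le> 1/2" using pq by simp
    qed
    finally show ?thesis .
  qed
  define D where "D = {(l1, l2, \<theta>). (cmod l1)\<^sup>2 + (cmod l2)\<^sup>2 \<le> 1 \<and> \<theta> \<in> (UNIV :: real set)}"
  define g where "g = (\<lambda>p. case p of (l1, l2, \<theta>) \<Rightarrow>
          N (ReOp (\<lambda>x. scaleC (exp (\<i> * complex_of_real \<theta>)) (scaleC l1 (B x) + scaleC l2 (C x)))))"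
  have w: "w_Ne N B C = (SUP p\<in>D. g p)" unfolding w_Ne_def D_def g_def by simp
  have gF: "g (l1, l2, \<theta>) = F (Re (exp (\<i> * complex_of_real \<theta>) * l1)) (Re (exp (\<i> * complex_of_real \<theta>) * l2))"
    for l1 l2 \<theta> unfolding g_def F_def by (simp add: ReOp_T[OF assms(2,3)])
  have gb: "g p \<le> Ub" if "p \<in> D" for p
  proof -
    obtain l1 l2 \<theta> where p: "p = (l1, l2, \<theta>)" and h: "(cmod l1)\<^sup>2 + (cmod l2)\<^sup>2 \<le> 1"
      using \<open>p \<in> D\<close> by (auto simp: D_def)
    define e where "e = exp (\<i> * complex_of_real \<theta>)"
    have ce: "cmod e = 1" by (simp add: e_def)
    have r: "(Re (e * l))\<^sup>2 \<le> (cmod l)\<^sup>2" for l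
      using cmod_power2[of "e * l"] ce by (simp add: norm_mult)
    show ?thesis unfolding p gF e_def[symmetric]
      by (rule Fb) (use r[of l1] r[of l2] h in linarith)
  qed
  have D0: "(0, 0, 0) \<in> D" by (simp add: D_def)
  have bdd: "bdd_above (g ` D)" using gb by (intro bdd_aboveI2) auto
  have up: "w_Ne N B C \<le> Ub" unfolding w using D0 gb by (intro cSUP_least) auto
  define r where "r = 1 / sqrt 2"
  have rpos': "r > 0" by (simp add: r_def)
  have cr: "cmod (complex_of_real r) = r" using rpos' by (simp only: norm_of_real)
  have r2: "(cmod (complex_of_real r))\<^sup>2 = 1/2" unfolding cr by (simp add: r_def power_divide)
  have inD1: "(complex_of_real r, complex_of_real r, 0) \<in> D" using r2 by (simp add: D_def)
  have inD2: "(complex_of_real r, - complex_of_real r, 0) \<in> D" using r2 by (simp add: D_def)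
  have rpos: "r > 0" by (simp add: r_def)
  have l1: "r * N P \<le> w_Ne N B C"
  proof -
    have "g (complex_of_real r, complex_of_real r, 0) = F r r" by (simp add: gF)
    also have "F r r = N (\<lambda>v. scaleC (complex_of_real r) (P v))"
      unfolding F_def P_def by (simp add: cm.scale_right_distrib)
    also have "\<dots> = r * N P" using rpos by (simp add: Nh bP)
    finally have "r * N P = g (complex_of_real r, complex_of_real r, 0)" by simp
    also have "\<dots> \<le> w_Ne N B C" unfolding w by (rule cSUP_upper[OF inD1 bdd])
    finally show ?thesis .
  qed
  have l2: "r * N Q \<le> w_Ne N B C"
  proof -
    have "g (complex_of_real r, - complex_of_real r, 0) = F r (- r)" by (simp add: gF)
    also have "F r (- r) = N (\<lambda>v. scaleC (complex_of_real r) (Q v))"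
      unfolding F_def Q_def by (simp add: cm.scale_right_diff_distrib)
    also have "\<dots> = r * N Q" using rpos by (simp add: Nh bQ)
    finally have "r * N Q = g (complex_of_real r, - complex_of_real r, 0)" by simp
    also have "\<dots> \<le> w_Ne N B C" unfolding w by (rule cSUP_upper[OF inD2 bdd])
    finally show ?thesis .
  qed
  have "r * max (N P) (N Q) \<le> w_Ne N B C"
    using l1 l2 by (simp add: max_def)
  with up show ?thesis unfolding r_def Ub_def P_def Q_def by simp
qed

end
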